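(* Let $G$ be a simple, undirected, connected graph on $N>2$ vertices with edge set $E$ and degree sequence $d_1\le d_2\le\cdots\le d_N$. Then $$R^+(G)\ge N(N-2)+2|E|\sum_{j=1}^N\frac{1}{d_j}-\frac{4|E|}{1+d_1}.$$
   Context: For vertices $i,j$ of $G$, $R_{ij}$ denotes the effective resistance between $i$ and $j$ when every edge of $G$ is a unit resistor. The additive degree-Kirchhoff index is $R^+(G)=\sum_{i<j}(d_i+d_j)R_{ij}$, where $d_i$ is the degree of vertex $i$. *)

theory Defs
  imports Complex_Main
begin

definition simple_graph :: "nat \<Rightarrow> (nat \<Rightarrow> nat \<Rightarrow> bool) \<Rightarrow> bool" where
  "simple_graph n E \<longleftrightarrow>
     (\<forall>i j. E i j \<longrightarrow> i < n \<and> j < n) \<and>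
     (\<forall>i j. E i j \<longrightarrow> E j i) \<and> (\<forall>i. \<not> E i i)"

definition connected_graph :: "nat \<Rightarrow> (nat \<Rightarrow> nat \<Rightarrow> bool) \<Rightarrow> bool" where
  "connected_graph n E \<longleftrightarrow> (\<forall>i<n. \<forall>j<n. E\<^sup>*\<^sup>* i j)"

definition degree :: "nat \<Rightarrow> (nat \<Rightarrow> nat \<Rightarrow> bool) \<Rightarrow> nat \<Rightarrow> nat" where
  "degree n E i = card {j. j < n \<and> E i j}"

definition num_edges :: "nat \<Rightarrow> (nat \<Rightarrow> nat \<Rightarrow> bool) \<Rightarrow> nat" where
  "num_edges n E = card {(i, j). i < j \<and> j < n \<and> E i j}"

text \<open>Effective resistance between i and j with unit resistors on every edge:
the potential difference x i - x j of a potential x on the vertices satisfying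
Kirchhoff's current law when a unit current enters at i and leaves at j
(net current out of v through its edges is sum over neighbours w of x v - x w).\<close>

definition eff_resistance :: "nat \<Rightarrow> (nat \<Rightarrow> nat \<Rightarrow> bool) \<Rightarrow> nat \<Rightarrow> nat \<Rightarrow> real" where
  "eff_resistance n E i j =
     (if i = j then 0 else
      (SOME r. \<exists>x :: nat \<Rightarrow> real.
         (\<forall>v<n. (\<Sum>w\<in>{w. w < n \<and> E v w}. x v - x w) =
                 (if v = i then 1 else if v = j then -1 else 0))
         \<and> r = x i - x j))"

definition add_deg_kirchhoff :: "nat \<Rightarrow> (nat \<Rightarrow> nat \<Rightarrow> bool) \<Rightarrow> real" where
  "add_deg_kirchhoff n E =
     (\<Sum>j<n. \<Sum>i<j. real (degree n E i + degree n E j) * eff_resistance n E i j)"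

end

theory Submission
  imports Defs "Jordan_Normal_Form.Determinant"
begin

hide_const (open) Polynomial.degree


lemma nb_eq: "{w. w < (N::nat) \<and> E v w} = {w\<in>{..<N}. E v w}" by auto

lemma sum_nb: "(\<Sum>w\<in>{w. w < (N::nat) \<and> E v w}. g w) = (\<Sum>w<N. if E v w then g w else 0)"
proof -
  have "(\<Sum>w<N. if E v w then g w else 0) = sum g {w\<in>{..<N}. E v w}"
    by (rule sum.inter_filter[symmetric]) simp
  then show ?thesis by (simp only: nb_eq)
qed

lemma swap_nb:
  assumes "simple_graph N E"
  shows "(\<Sum>v<N. \<Sum>w\<in>{w. w < N \<and> E v w}. g v w) = (\<Sum>v<N. \<Sum>w\<in>{w. w < N \<and> E v w}. g w v)"
proof -
  have sym: "\<And>v w. E v w = E w v" using assms unfolding simple_graph_def by blast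
  have "(\<Sum>v<N. \<Sum>w\<in>{w. w < N \<and> E v w}. g v w) = (\<Sum>v<N. \<Sum>w<N. if E v w then g v w else 0)"
    by (simp add: sum_nb)
  also have "\<dots> = (\<Sum>w<N. \<Sum>v<N. if E v w then g v w else 0)" by (rule sum.swap)
  also have "\<dots> = (\<Sum>w<N. \<Sum>v<N. if E w v then g v w else 0)" using sym by simp
  also have "\<dots> = (\<Sum>v<N. \<Sum>w\<in>{w. w < N \<and> E v w}. g w v)" by (simp add: sum_nb)
  finally show ?thesis .
qed

definition Lap :: "nat \<Rightarrow> (nat \<Rightarrow> nat \<Rightarrow> bool) \<Rightarrow> (nat \<Rightarrow> real) \<Rightarrow> nat \<Rightarrow> real" where
  "Lap N E x v = (\<Sum>w\<in>{w. w < N \<and> E v w}. x v - x w)"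

definition Bf :: "nat \<Rightarrow> (nat \<Rightarrow> nat \<Rightarrow> bool) \<Rightarrow> (nat \<Rightarrow> real) \<Rightarrow> (nat \<Rightarrow> real) \<Rightarrow> real" where
  "Bf N E x y = (\<Sum>v<N. y v * Lap N E x v)"

lemma energy:
  assumes "simple_graph N E"
  shows "2 * Bf N E z z = (\<Sum>v<N. \<Sum>w\<in>{w. w < N \<and> E v w}. (z v - z w)^2)"
proof -
  have "Bf N E z z = (\<Sum>v<N. \<Sum>w\<in>{w. w < N \<and> E v w}. z v * (z v - z w))"
    unfolding Bf_def Lap_def by (simp add: sum_distrib_left)
  also have "\<dots> = (\<Sum>v<N. \<Sum>w\<in>{w. w < N \<and> E v w}. z w * (z w - z v))"
    by (rule swap_nb[OF assms])
  finally have "2 * Bf N E z z = (\<Sum>v<N. \<Sum>w\<in>{w. w < N \<and> E v w}. z v * (z v - z w))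
     + (\<Sum>v<N. \<Sum>w\<in>{w. w < N \<and> E v w}. z w * (z w - z v))"
    unfolding Bf_def Lap_def by (simp add: sum_distrib_left)
  also have "\<dots> = (\<Sum>v<N. \<Sum>w\<in>{w. w < N \<and> E v w}. (z v - z w)^2)"
    by (simp add: sum.distrib[symmetric] power2_eq_square algebra_simps)
  finally show ?thesis .
qed

lemma Bf_nonneg:
  assumes "simple_graph N E"
  shows "Bf N E z z \<ge> 0"
proof -
  have "0 \<le> (\<Sum>v<N. \<Sum>w\<in>{w. w < N \<and> E v w}. (z v - z w)^2)"
    by (intro sum_nonneg) auto
  with energy[OF assms, of z] show ?thesis by linarith
qed

lemma Bf_sym:
  assumes "simple_graph N E"
  shows "Bf N E x y = Bf N E y x"
proof -
  have "Bf N E x y - Bf N E y x = (\<Sum>v<N. \<Sum>w\<in>{w. w < N \<and> E v w}. x v * y w - y v * x w)"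
    unfolding Bf_def Lap_def by (simp add: sum_distrib_left sum_subtractf[symmetric] algebra_simps)
  also have "\<dots> = (\<Sum>v<N. \<Sum>w\<in>{w. w < N \<and> E v w}. x w * y v - y w * x v)"
    by (rule swap_nb[OF assms])
  also have "\<dots> = - (\<Sum>v<N. \<Sum>w\<in>{w. w < N \<and> E v w}. x v * y w - y v * x w)"
    by (simp add: sum_negf[symmetric] algebra_simps)
  finally show ?thesis
    using \<open>Bf N E x y - Bf N E y x = _\<close> by linarith
qed

lemma Bf_expand:
  "Bf N E (\<lambda>k. x k - y k) (\<lambda>k. x k - y k) = Bf N E x x - Bf N E x y - Bf N E y x + Bf N E y y"
  unfolding Bf_def Lap_def
  by (simp add: sum_subtractf sum.distrib algebra_simps sum_distrib_left)

lemma Lap_sum_zero: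
  assumes "simple_graph N E"
  shows "(\<Sum>v<N. Lap N E x v) = 0"
proof -
  have "(\<Sum>v<N. Lap N E x v) = (\<Sum>v<N. \<Sum>w\<in>{w. w < N \<and> E v w}. x w - x v)"
    unfolding Lap_def by (rule swap_nb[OF assms])
  also have "\<dots> = - (\<Sum>v<N. Lap N E x v)"
    unfolding Lap_def by (simp add: sum_negf[symmetric])
  finally show ?thesis by linarith
qed



lemma conn_const:
  assumes sg: "simple_graph N E" and cg: "connected_graph N E"
    and eq: "\<And>v w. v < N \<Longrightarrow> w < N \<Longrightarrow> E v w \<Longrightarrow> z v = z w"
    and j: "j < N" and k: "k < N"
  shows "z k = z j"
proof -
  have "E\<^sup>*\<^sup>* j k" using cg j k unfolding connected_graph_def by blast
  then show ?thesis
  proof (induction rule: rtranclp_induct)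
    case base then show ?case by simp
  next
    case (step c d)
    have "c < N" "d < N" using step.hyps(2) sg unfolding simple_graph_def by auto
    with eq[OF this step.hyps(2)] step.IH show ?case by simp
  qed
qed

lemma exists_potential:
  assumes sg: "simple_graph N E" and cg: "connected_graph N E"
    and i: "i < N" and j: "j < N" and ij: "i \<noteq> j"
  shows "\<exists>x :: nat \<Rightarrow> real. \<forall>v<N. (\<Sum>w\<in>{w. w < N \<and> E v w}. x v - x w) =
                 (if v = i then 1 else if v = j then -1 else 0)"
proof -
  define M :: "real mat" where "M = mat N N (\<lambda>(r,c). if r = j then (if c = j then 1 else 0)
      else (if c = r then real (card {w. w < N \<and> E r w}) else 0) - (if E r c then 1 else 0))"
  have Mc: "M \<in> carrier_mat N N" unfolding M_def by simp
  have Mv: "(M *\<^sub>v z) $ r = (if r = j then z $ j else Lap N E (\<lambda>k. z $ k) r)"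
    if z: "z \<in> carrier_vec N" and r: "r < N" for z r
  proof -
    have "(M *\<^sub>v z) $ r = (\<Sum>c<N. M $$ (r,c) * z $ c)"
      using z r Mc by (simp add: scalar_prod_def lessThan_atLeast0)
    also have "\<dots> = (if r = j then z $ j else Lap N E (\<lambda>k. z $ k) r)"
    proof (cases "r = j")
      case True
      have "(\<Sum>c<N. M $$ (r,c) * z $ c) = (\<Sum>c<N. if c = j then z $ c else 0)"
        using True r by (intro sum.cong) (auto simp: M_def)
      then show ?thesis using True j by simp
    next
      case False
      have "(\<Sum>c<N. M $$ (r,c) * z $ c) = (\<Sum>c<N. (if c = r then real (card {w. w < N \<and> E r w}) * z $ r else 0) - (if E r c then z $ c else 0))"
        using False r by (intro sum.cong) (auto simp: M_def algebra_simps)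
      also have "\<dots> = real (card {w. w < N \<and> E r w}) * z $ r - (\<Sum>c<N. if E r c then z $ c else 0)"
        using r by (simp add: sum_subtractf)
      also have "\<dots> = Lap N E (\<lambda>k. z $ k) r"
        unfolding Lap_def by (simp add: sum_subtractf sum_nb)
      finally show ?thesis using False by simp
    qed
    finally show ?thesis .
  qed
  have "det M \<noteq> 0"
  proof
    assume "det M = 0"
    then obtain v where v: "v \<in> carrier_vec N" "v \<noteq> 0\<^sub>v N" "M *\<^sub>v v = 0\<^sub>v N"
      using det_0_iff_vec_prod_zero[OF Mc] by auto
    define z where "z = (\<lambda>k. v $ k)"
    have zj: "z j = 0" using Mv[OF v(1) j] v(3) j unfolding z_def by simp
    have Lz: "Lap N E z r = 0" if "r < N" "r \<noteq> j" for r
      using Mv[OF v(1) that(1)] v(3) that unfolding z_def by simp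
    have "Bf N E z z = 0" unfolding Bf_def
      by (rule sum.neutral) (use Lz zj in auto)
    then have S0: "(\<Sum>v<N. \<Sum>w\<in>{w. w < N \<and> E v w}. (z v - z w)^2) = 0"
      using energy[OF sg, of z] by simp
    have eq: "z a = z b" if "a < N" "b < N" "E a b" for a b
    proof -
      have "(\<Sum>w\<in>{w. w < N \<and> E a w}. (z a - z w)^2) = 0"
        using S0 that(1) by (subst (asm) sum_nonneg_eq_0_iff) (auto intro: sum_nonneg)
      then have "(z a - z b)^2 = 0" using that by (subst (asm) sum_nonneg_eq_0_iff) auto
      then show ?thesis by simp
    qed
    have "\<forall>k<N. z k = 0"
    proof (intro allI impI)
      fix k assume "k < N"
      from conn_const[OF sg cg _ j this, of z] eq zj show "z k = 0" by auto
    qed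
    then have "v = 0\<^sub>v N" using v(1) unfolding z_def by (intro eq_vecI) auto
    with v(2) show False by simp
  qed
  then have "M \<in> Units (ring_mat TYPE(real) N undefined)"
    by (rule det_non_zero_imp_unit[OF Mc])
  then obtain B where B: "B \<in> carrier_mat N N" "M * B = 1\<^sub>m N"
    unfolding Units_def ring_mat_def by auto
  define xv where "xv = B *\<^sub>v unit_vec N i"
  have xvc: "xv \<in> carrier_vec N" unfolding xv_def using B by simp
  have Mx: "M *\<^sub>v xv = unit_vec N i"
    unfolding xv_def using B Mc by (simp add: assoc_mult_mat_vec[symmetric, of _ N N _ N])
  define x where "x = (\<lambda>k. xv $ k)"
  have L1: "Lap N E x v = (if v = i then 1 else 0)" if "v < N" "v \<noteq> j" for v
    using Mv[OF xvc that(1)] Mx that unfolding x_def by (simp add: unit_vec_def)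
  have "(\<Sum>v<N. Lap N E x v) = 0" by (rule Lap_sum_zero[OF sg])
  moreover have "(\<Sum>v<N. Lap N E x v) = Lap N E x j + (\<Sum>v\<in>{..<N}-{j}. Lap N E x v)"
    using j by (simp add: sum.remove)
  moreover have "(\<Sum>v\<in>{..<N}-{j}. Lap N E x v) = (\<Sum>v\<in>{..<N}-{j}. if v = i then 1 else 0)"
    using L1 by (intro sum.cong) auto
  moreover have "(\<Sum>v\<in>{..<N}-{j}. if v = i then 1 else 0 :: real) = 1"
    using i ij by (simp add: sum.delta)
  ultimately have Lj: "Lap N E x j = -1" by linarith
  show ?thesis
    by (rule exI[of _ x]) (use L1 Lj ij in \<open>auto simp: Lap_def\<close>)
qed





lemma sum_ij:
  assumes "i < N" "j < (N::nat)" "i \<noteq> j"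
  shows "(\<Sum>v<N. y v * (if v = i then 1 else if v = j then -1 else 0)) = y i - (y j :: real)"
proof -
  have "(\<Sum>v<N. y v * (if v = i then 1 else if v = j then -1 else 0))
     = (\<Sum>v<N. (if v = i then y v else 0) - (if v = j then y v else 0))"
    using assms by (intro sum.cong) auto
  also have "\<dots> = y i - y j" using assms by (simp add: sum_subtractf)
  finally show ?thesis .
qed

lemma res_bound:
  assumes sg: "simple_graph N E" and cg: "connected_graph N E"
    and i: "i < N" and j: "j < N" and ij: "i \<noteq> j"
  shows "eff_resistance N E i j \<ge> 2 * (a + b) - (a^2 * real (degree N E i) + b^2 * real (degree N E j)
           + 2 * a * b * (if E i j then 1 else 0))"
proof -
  let ?P = "\<lambda>r. \<exists>x :: nat \<Rightarrow> real.
         (\<forall>v<N. (\<Sum>w\<in>{w. w < N \<and> E v w}. x v - x w) =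
                 (if v = i then 1 else if v = j then -1 else 0))
         \<and> r = x i - x j"
  have "\<exists>r. ?P r" using exists_potential[OF sg cg i j ij] by blast
  then have "?P (SOME r. ?P r)" by (rule someI_ex)
  then obtain x where xv: "\<forall>v<N. Lap N E x v = (if v = i then 1 else if v = j then -1 else 0)"
     and R: "eff_resistance N E i j = x i - x j"
    unfolding eff_resistance_def Lap_def using ij by auto
  have Bxy: "Bf N E x y = y i - y j" for y
  proof -
    have "Bf N E x y = (\<Sum>v<N. y v * (if v = i then 1 else if v = j then -1 else 0))"
      unfolding Bf_def using xv by (intro sum.cong) auto
    then show ?thesis using sum_ij[OF i j ij] by simp
  qed
  define y where "y = (\<lambda>k. if k = i then a else if k = j then -b else (0::real))"
  have "0 \<le> Bf N E (\<lambda>k. x k - y k) (\<lambda>k. x k - y k)" by (rule Bf_nonneg[OF sg])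
  also have "\<dots> = Bf N E x x - Bf N E x y - Bf N E y x + Bf N E y y" by (rule Bf_expand)
  also have "\<dots> = (x i - x j) - 2 * (y i - y j) + Bf N E y y"
    using Bxy Bf_sym[OF sg, of y x] by simp
  finally have main: "x i - x j \<ge> 2 * (y i - y j) - Bf N E y y" by linarith
  have irr: "\<And>v. \<not> E v v" and sym: "\<And>v w. E v w = E w v"
    using sg unfolding simple_graph_def by blast+
  have sy: "(\<Sum>w\<in>{w. w < N \<and> E u w}. y w) = (if E u j then -b else 0) + (if E u i then a else 0)"
    if "u = i \<or> u = j" for u
  proof -
    have "(\<Sum>w\<in>{w. w < N \<and> E u w}. y w) = (\<Sum>w\<in>{w. w < N \<and> E u w}. (if w = j then -b else 0) + (if w = i then a else 0))"
      unfolding y_def using ij by (intro sum.cong) auto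
    also have "\<dots> = (if E u j then -b else 0) + (if E u i then a else 0)"
      using i j by (simp add: sum.distrib)
    finally show ?thesis .
  qed
  have yi: "y i = a" and yj: "y j = - b" unfolding y_def using ij by auto
  have Li: "Lap N E y i = a * real (degree N E i) + (if E i j then b else 0)"
  proof -
    have "Lap N E y i = (\<Sum>w\<in>{w. w < N \<and> E i w}. y i) - (\<Sum>w\<in>{w. w < N \<and> E i w}. y w)"
      unfolding Lap_def by (simp add: sum_subtractf)
    also have "\<dots> = a * real (degree N E i) + (if E i j then b else 0)"
      unfolding sy[of i, simplified] Defs.degree_def yi using irr[of i] by simp
    finally show ?thesis .
  qed
  have Lj: "Lap N E y j = - b * real (degree N E j) - (if E j i then a else 0)"
  proof -
    have "Lap N E y j = (\<Sum>w\<in>{w. w < N \<and> E j w}. y j) - (\<Sum>w\<in>{w. w < N \<and> E j w}. y w)"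
      unfolding Lap_def by (simp add: sum_subtractf)
    also have "\<dots> = - b * real (degree N E j) - (if E j i then a else 0)"
      unfolding sy[of j, simplified] Defs.degree_def yj using irr[of j] by simp
    finally show ?thesis .
  qed
  have "Bf N E y y = (\<Sum>v<N. (if v = i then a * Lap N E y i else 0) + (if v = j then - b * Lap N E y j else 0))"
    unfolding Bf_def y_def using ij by (intro sum.cong) auto
  also have "\<dots> = a * Lap N E y i - b * Lap N E y j" using i j by (simp add: sum.distrib)
  also have "\<dots> = a^2 * real (degree N E i) + b^2 * real (degree N E j) + 2 * a * b * (if E i j then 1 else 0)"
    unfolding Li Lj using sym[of i j] by (simp add: power2_eq_square algebra_simps)
  finally have "Bf N E y y = \<dots>" .
  moreover have "y i - y j = a + b" unfolding y_def using ij by simp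
  ultimately show ?thesis using main R by simp
qed



lemma ineq:
  fixes a b m :: real
  assumes a1: "1 \<le> a" and ab: "a \<le> b" and m0: "0 \<le> m" and ma: "m \<le> a" and p2: "a * b \<ge> 2"
  shows "(a+b)*(1/a+1/b) - 4/(1+m) \<le> (a+b)*((a+b-2)/(a*b-1))"
proof -
  have b1: "1 \<le> b" using a1 ab by linarith
  have "4*(a*b)*(a*b-1) - (a+b)*(2*a*b-(a+b))*(1+a) = (b-a)*((2*a^2-a+1)*b - a - a^2)"
    by (simp add: algebra_simps power2_eq_square)
  moreover have "(2*a^2-a+1)*b - a - a^2 \<ge> 0"
  proof -
    have c: "2*a^2-a+1 \<ge> 0" using a1 by (simp add: power2_eq_square)
    have "(2*a^2-a+1)*b \<ge> (2*a^2-a+1)*a" using mult_left_mono[OF ab c] .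
    moreover have "(2*a^2-a+1)*a - a - a^2 = 2*a^2*(a-1)" by (simp add: algebra_simps power2_eq_square)
    moreover have "2*a^2*(a-1) \<ge> 0" using a1 by simp
    ultimately show ?thesis by linarith
  qed
  ultimately have key: "(a+b)*(2*a*b-(a+b))*(1+a) \<le> 4*(a*b)*(a*b-1)"
    using ab by (smt (verit) mult_nonneg_nonneg)
  have a0: "a > 0" and b0: "b > 0" and p1: "a*b - 1 > 0" using a1 b1 p2 by auto
  have "(a+b)*(1/a+1/b) - (a+b)*((a+b-2)/(a*b-1)) = (a+b)*(2*a*b-(a+b))/((a*b)*(a*b-1))"
    using a0 b0 p1 by (simp add: field_simps)
  also have "\<dots> \<le> 4/(1+a)"
    using key a0 b0 p1 by (simp add: divide_simps mult.commute mult.left_commute)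
  also have "\<dots> \<le> 4/(1+m)" using m0 ma by (intro divide_left_mono) auto
  finally show ?thesis by linarith
qed

lemma half_sum:
  fixes f :: "nat \<Rightarrow> nat \<Rightarrow> real"
  assumes sym: "\<And>i j. f i j = f j i"
  shows "2 * (\<Sum>j<n. \<Sum>i<j. f i j) = (\<Sum>i<n. \<Sum>j<n. f i j) - (\<Sum>i<n. f i i)"
proof (induction n)
  case 0 then show ?case by simp
next
  case (Suc n)
  have "(\<Sum>i<Suc n. \<Sum>j<Suc n. f i j) = (\<Sum>i<n. \<Sum>j<n. f i j) + (\<Sum>i<n. f i n) + (\<Sum>j<n. f n j) + f n n"
    by (simp add: sum.distrib)
  moreover have "(\<Sum>j<n. f n j) = (\<Sum>i<n. f i n)" using sym by simp
  ultimately show ?case using Suc by (simp add: algebra_simps)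
qed

lemma card_filter_sum: "card {i. i < (n::nat) \<and> P i} = (\<Sum>i<n. if P i then 1 else 0)"
proof -
  have "{i. i < n \<and> P i} = {i\<in>{..<n}. P i}" by auto
  then have "card {i. i < n \<and> P i} = (\<Sum>i\<in>{i\<in>{..<n}. P i}. 1)" by simp
  also have "\<dots> = (\<Sum>i<n. if P i then 1 else 0)" by (rule sum.inter_filter) simp
  finally show ?thesis .
qed

lemma num_edges_sum:
  "card {(i, j). i < j \<and> j < (n::nat) \<and> E i j} = (\<Sum>j<n. \<Sum>i<j. if E i j then 1 else 0)"
proof (induction n)
  case 0 then show ?case by simp
next
  case (Suc n)
  have "{(i, j). i < j \<and> j < Suc n \<and> E i j} = {(i, j). i < j \<and> j < n \<and> E i j} \<union> (\<lambda>i. (i, n)) ` {i. i < n \<and> E i n}"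
    by (auto simp: image_iff less_Suc_eq)
  moreover have "finite {(i, j). i < j \<and> j < n \<and> E i j}"
    by (rule finite_subset[of _ "{..<n} \<times> {..<n}"]) auto
  moreover have "card ((\<lambda>i. (i, n)) ` {i. i < n \<and> E i n}) = card {i. i < n \<and> E i n}"
    by (rule card_image) (auto simp: inj_on_def)
  moreover have "card ({(i, j). i < j \<and> j < n \<and> E i j} \<union> (\<lambda>i. (i, n)) ` {i. i < n \<and> E i n})
     = card {(i, j). i < j \<and> j < n \<and> E i j} + card ((\<lambda>i. (i, n)) ` {i. i < n \<and> E i n})"
    by (rule card_Un_disjoint) (use calculation(2) in auto)
  ultimately have "card {(i, j). i < j \<and> j < Suc n \<and> E i j} = card {(i, j). i < j \<and> j < n \<and> E i j} + card {i. i < n \<and> E i n}"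
    by simp
  then show ?case using Suc by (simp add: card_filter_sum)
qed



lemma deg_pos:
  assumes sg: "simple_graph N E" and cg: "connected_graph N E" and N: "N \<ge> 2" and v: "v < N"
  shows "degree N E v \<ge> 1"
proof -
  define u where "u = (if v = 0 then 1 else (0::nat))"
  have u: "u < N" "u \<noteq> v" using N v unfolding u_def by auto
  have "E\<^sup>*\<^sup>* v u" using cg u v unfolding connected_graph_def by blast
  then obtain w where "E v w" using u(2) by (cases rule: converse_rtranclpE) auto
  then have "w \<in> {w. w < N \<and> E v w}" using sg unfolding simple_graph_def by auto
  then have "card {w. w < N \<and> E v w} > 0" by (subst card_gt_0_iff) auto
  then show ?thesis unfolding Defs.degree_def by simp
qed

lemma adj_prod:
  assumes sg: "simple_graph N E" and cg: "connected_graph N E" and N: "N > 2" and e: "E i j"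
  shows "degree N E i * degree N E j \<ge> 2"
proof (rule ccontr)
  assume neg: "\<not> ?thesis"
  have ij: "i < N" "j < N" "i \<noteq> j" using sg e unfolding simple_graph_def by auto
  have "degree N E i \<ge> 1" "degree N E j \<ge> 1" using deg_pos[OF sg cg] N ij by auto
  with neg have d1: "degree N E i = 1" "degree N E j = 1"
  proof -
    have "degree N E i \<le> degree N E i * degree N E j" "degree N E j \<le> degree N E i * degree N E j"
      using \<open>degree N E i \<ge> 1\<close> \<open>degree N E j \<ge> 1\<close> by simp_all
    then show "degree N E i = 1" "degree N E j = 1"
      using neg \<open>degree N E i \<ge> 1\<close> \<open>degree N E j \<ge> 1\<close> by linarith+
  qed
  have ji: "E j i" using sg e unfolding simple_graph_def by auto
  have nbi: "{w. w < N \<and> E i w} = {j}"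
  proof -
    have "card {w. w < N \<and> E i w} = 1" using d1 unfolding Defs.degree_def by simp
    then obtain x where "{w. w < N \<and> E i w} = {x}" by (auto simp: card_Suc_eq)
    moreover have "j \<in> {w. w < N \<and> E i w}" using ij e by simp
    ultimately show ?thesis by auto
  qed
  have nbj: "{w. w < N \<and> E j w} = {i}"
  proof -
    have "card {w. w < N \<and> E j w} = 1" using d1 unfolding Defs.degree_def by simp
    then obtain x where "{w. w < N \<and> E j w} = {x}" by (auto simp: card_Suc_eq)
    moreover have "i \<in> {w. w < N \<and> E j w}" using ij ji by simp
    ultimately show ?thesis by auto
  qed
  obtain k where k: "k < N" "k \<noteq> i" "k \<noteq> j"
  proof -
    define k where "k = (if 0 \<noteq> i \<and> 0 \<noteq> j then 0 else if 1 \<noteq> i \<and> 1 \<noteq> j then 1 else (2::nat))"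
    have "k < N" "k \<noteq> i" "k \<noteq> j" using N ij(3) unfolding k_def by auto
    then show ?thesis using that by blast
  qed
  have "E\<^sup>*\<^sup>* i k" using cg k ij unfolding connected_graph_def by blast
  then have "k \<in> {i, j}"
  proof (induction rule: rtranclp_induct)
    case base then show ?case by simp
  next
    case (step c d)
    have "d < N" using step.hyps(2) sg unfolding simple_graph_def by auto
    then show ?case using step nbi nbj by (auto simp: set_eq_iff)
  qed
  with k show False by auto
qed



theorem theorem3:
  fixes N :: nat and E :: "nat \<Rightarrow> nat \<Rightarrow> bool"
  assumes "simple_graph N E" and "connected_graph N E" and "N > 2"
  shows "add_deg_kirchhoff N E \<ge>
           real N * (real N - 2)
           + 2 * real (num_edges N E) * (\<Sum>j<N. 1 / real (degree N E j))
           - 4 * real (num_edges N E) / (1 + real (Min (degree N E ` {..<N})))"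
proof -
  note sg = assms(1) and cg = assms(2) and N = assms(3)
  define d where "d = (\<lambda>k. real (degree N E k))"
  define m where "m = real (Min (degree N E ` {..<N}))"
  define S where "S = (\<Sum>j<N. 1 / d j)"
  define D where "D = (\<Sum>j<N. d j)"
  define e where "e = (\<lambda>i j. if E i j then 1 else (0::real))"
  have sym: "\<And>v w. E v w = E w v" using sg unfolding simple_graph_def by blast
  have dpos: "d k \<ge> 1" if "k < N" for k using deg_pos[OF sg cg _ that] N unfolding d_def by simp
  have dnz: "d k \<noteq> 0" if "k < N" for k using dpos[OF that] by simp
  have mle: "m \<le> d k" if "k < N" for k
    unfolding m_def d_def using that by (simp add: Min_le)
  have m0: "m \<ge> 0" unfolding m_def by simp
  define f where "f = (\<lambda>i j. (d i + d j) * (1 / d i + 1 / d j))"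
  have pair: "real (degree N E i + degree N E j) * eff_resistance N E i j \<ge> f i j - 4 / (1 + m) * e i j"
    if ij: "i < j" "j < N" for i j
  proof -
    have i: "i < N" and ne: "i \<noteq> j" using ij by auto
    have di: "d i \<ge> 1" and dj: "d j \<ge> 1" using dpos i ij by auto
    have dsum: "real (degree N E i + degree N E j) = d i + d j" unfolding d_def by simp
    show ?thesis
    proof (cases "E i j")
      case False
      have "eff_resistance N E i j \<ge> 2 * (1 / d i + 1 / d j) - ((1 / d i)^2 * d i + (1 / d j)^2 * d j)"
        using res_bound[OF sg cg i ij(2) ne, of "1 / d i" "1 / d j"] False unfolding d_def by simp
      also have "2 * (1 / d i + 1 / d j) - ((1 / d i)^2 * d i + (1 / d j)^2 * d j) = 1 / d i + 1 / d j"
        using di dj by (simp add: power2_eq_square field_simps)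
      finally have "eff_resistance N E i j \<ge> 1 / d i + 1 / d j" .
      then have "(d i + d j) * eff_resistance N E i j \<ge> f i j"
        unfolding f_def using di dj by (intro mult_left_mono) auto
      then show ?thesis using False dsum unfolding e_def by simp
    next
      case True
      have p2: "d i * d j \<ge> 2" using adj_prod[OF sg cg N True] unfolding d_def
        by (metis of_nat_mult of_nat_numeral of_nat_le_iff)
      define a where "a = (d j - 1) / (d i * d j - 1)"
      define b where "b = (d i - 1) / (d i * d j - 1)"
      have p1: "d i * d j - 1 > 0" using p2 by linarith
      have ha: "a * d i + b = 1"
      proof -
        have "a * d i + b = ((d j - 1) * d i + (d i - 1)) / (d i * d j - 1)"
          unfolding a_def b_def by (simp add: add_divide_distrib times_divide_eq_left)
        also have "(d j - 1) * d i + (d i - 1) = d i * d j - 1" by (simp add: algebra_simps)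
        finally show ?thesis using p1 by simp
      qed
      have hb: "a + b * d j = 1"
      proof -
        have "a + b * d j = ((d j - 1) + (d i - 1) * d j) / (d i * d j - 1)"
          unfolding a_def b_def by (simp add: add_divide_distrib times_divide_eq_left)
        also have "(d j - 1) + (d i - 1) * d j = d i * d j - 1" by (simp add: algebra_simps)
        finally show ?thesis using p1 by simp
      qed
      have "eff_resistance N E i j \<ge> 2 * (a + b) - (a^2 * d i + b^2 * d j + 2 * a * b)"
        using res_bound[OF sg cg i ij(2) ne, of a b] True unfolding d_def by simp
      also have "a^2 * d i + b^2 * d j + 2 * a * b = a * (a * d i + b) + b * (a + b * d j)"
        by (simp add: power2_eq_square algebra_simps)
      also have "\<dots> = a + b" using ha hb by simp
      also have "2 * (a + b) - (a + b) = (d i + d j - 2) / (d i * d j - 1)"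
      proof -
        have "a + b = ((d j - 1) + (d i - 1)) / (d i * d j - 1)"
          unfolding a_def b_def by (simp only: add_divide_distrib[symmetric])
        also have "(d j - 1) + (d i - 1) = d i + d j - 2" by simp
        finally show ?thesis by simp
      qed
      finally have R: "eff_resistance N E i j \<ge> (d i + d j - 2) / (d i * d j - 1)" .
      have "f i j - 4 / (1 + m) \<le> (d i + d j) * ((d i + d j - 2) / (d i * d j - 1))"
      proof (cases "d i \<le> d j")
        case True
        then show ?thesis unfolding f_def
          using ineq[OF di True m0 mle[OF i] p2] by simp
      next
        case False
        have "(d j + d i) * (1 / d j + 1 / d i) - 4 / (1 + m) \<le> (d j + d i) * ((d j + d i - 2) / (d j * d i - 1))"
          using ineq[of "d j" "d i" m] dj False m0 mle[OF ij(2)] p2 by (simp add: mult.commute)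
        then show ?thesis unfolding f_def by (simp add: algebra_simps)
      qed
      also have "\<dots> \<le> (d i + d j) * eff_resistance N E i j"
        using R di dj by (intro mult_left_mono) auto
      finally show ?thesis using True dsum unfolding e_def by simp
    qed
  qed
  have "add_deg_kirchhoff N E \<ge> (\<Sum>j<N. \<Sum>i<j. f i j - 4 / (1 + m) * e i j)"
    unfolding add_deg_kirchhoff_def by (intro sum_mono) (use pair in auto)
  also have "(\<Sum>j<N. \<Sum>i<j. f i j - 4 / (1 + m) * e i j)
      = (\<Sum>j<N. \<Sum>i<j. f i j) - 4 / (1 + m) * (\<Sum>j<N. \<Sum>i<j. e i j)"
    by (simp add: sum_subtractf sum_distrib_left)
  finally have main: "add_deg_kirchhoff N E \<ge> (\<Sum>j<N. \<Sum>i<j. f i j) - 4 / (1 + m) * (\<Sum>j<N. \<Sum>i<j. e i j)" .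
  have Ecnt: "(\<Sum>j<N. \<Sum>i<j. e i j) = real (num_edges N E)"
    unfolding num_edges_def num_edges_sum e_def by (simp add: of_nat_sum if_distrib cong: if_cong)
  have "2 * (\<Sum>j<N. \<Sum>i<j. e i j) = (\<Sum>i<N. \<Sum>j<N. e i j) - (\<Sum>i<N. e i i)"
    by (rule half_sum) (simp add: e_def sym)
  also have "(\<Sum>i<N. e i i) = 0" unfolding e_def using sg unfolding simple_graph_def by simp
  also have "(\<Sum>i<N. \<Sum>j<N. e i j) = D"
    unfolding D_def d_def Defs.degree_def e_def using card_filter_sum[of N "E _"]
    by (simp add: of_nat_sum if_distrib cong: if_cong)
  finally have DE: "D = 2 * real (num_edges N E)" using Ecnt by simp
  have fsym: "\<And>i j. f i j = f j i" unfolding f_def by (simp add: algebra_simps)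
  have "2 * (\<Sum>j<N. \<Sum>i<j. f i j) = (\<Sum>i<N. \<Sum>j<N. f i j) - (\<Sum>i<N. f i i)"
    by (rule half_sum[OF fsym])
  also have "(\<Sum>i<N. f i i) = 4 * real N"
  proof -
    have "(\<Sum>i<N. f i i) = (\<Sum>i<N. 4)"
      by (intro sum.cong) (auto simp: f_def field_simps dnz)
    then show ?thesis by simp
  qed
  also have "(\<Sum>i<N. \<Sum>j<N. f i j) = (\<Sum>i<N. \<Sum>j<N. 2 + d i * (1 / d j) + d j * (1 / d i))"
    by (intro sum.cong refl) (auto simp: f_def field_simps dnz)
  also have "\<dots> = (\<Sum>i<N. 2 * real N + d i * S + D * (1 / d i))"
  proof (rule sum.cong[OF refl])
    fix i
    have "(\<Sum>j<N. 2 + d i * (1 / d j) + d j * (1 / d i)) = (\<Sum>j<N. 2) + (\<Sum>j<N. d i * (1 / d j)) + (\<Sum>j<N. d j * (1 / d i))"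
      by (simp only: sum.distrib)
    also have "\<dots> = 2 * real N + d i * S + D * (1 / d i)"
      unfolding S_def D_def by (simp only: sum_distrib_left[symmetric] sum_distrib_right[symmetric]) simp
    finally show "(\<Sum>j<N. 2 + d i * (1 / d j) + d j * (1 / d i)) = 2 * real N + d i * S + D * (1 / d i)" .
  qed
  also have "\<dots> = (\<Sum>i<N. 2 * real N) + (\<Sum>i<N. d i * S) + (\<Sum>i<N. D * (1 / d i))"
    by (simp only: sum.distrib)
  also have "\<dots> = 2 * real N * real N + D * S + D * S"
    unfolding S_def D_def by (simp only: sum_distrib_left[symmetric] sum_distrib_right[symmetric]) simp
  finally have F: "(\<Sum>j<N. \<Sum>i<j. f i j) = real N * (real N - 2) + D * S"
    by (simp add: algebra_simps)
  show ?thesis using main F Ecnt DE unfolding m_def S_def d_def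
    by (simp add: algebra_simps)
qed


end
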